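(* For every integer $n\ge 0$ let $\mathcal P_n$ be the complex vector space of polynomials $p(\xi_1,\ldots,\xi_n|\eta_1,\ldots,\eta_n)$ that are homogeneous of weighted degree $n$, where the variables $\xi_i$ and $\eta_i$ are assigned weight $i$, and that satisfy the following condition: for every integer $N\ge0$ and every $k\in\frac12\mathbb Z$ with $N/2+k$ and $N/2-k$ non-negative integers, the polynomials $$P^{[p]}_{N,k}(X|Y)=p\bigl(S_1(X),\ldots,S_n(X)\,\big|\,S_1(Y),\ldots,S_n(Y)\bigr),\qquad X=(x_1,\ldots,x_{N/2+k}),\ Y=(y_1,\ldots,y_{N/2-k}),$$ where $S_r(X)=\sum_i x_i^r$ denotes the $r$-th power sum, satisfy $$P^{[p]}_{N+2,k}(X,-x\,|\,x,Y)=P^{[p]}_{N,k}(X|Y)$$ identically in all variables (on the left, the first group of variables is $(x_1,\ldots,x_{N/2+k},-x)$ and the second is $(x,y_1,\ldots,y_{N/2-k})$). Then $$\sum_{n=0}^\infty q^n\dim\mathcal P_n=\prod_{k=1}^\infty\frac1{1-q^k}.$$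
   Context: The right-hand side is the generating function of the number of integer partitions, i.e. the character of the Fock module of a single Heisenberg algebra. *)

theory Defs
  imports Complex_Main "HOL-Computational_Algebra.Formal_Power_Series" "HOL-Library.Function_Algebras"
begin

text \<open>A monomial in \<xi>_1..\<xi>_n, \<eta>_1..\<eta>_n is a pair (a,b) of exponent functions;
  a i is the exponent of \<xi>_i and b i that of \<eta>_i.\<close>
type_synonym monom = "(nat \<Rightarrow> nat) \<times> (nat \<Rightarrow> nat)"

definition wmonoms :: "nat \<Rightarrow> monom set" where
  "wmonoms n = {(a, b). (\<forall>i. i \<notin> {1..n} \<longrightarrow> a i = 0 \<and> b i = 0) \<and>
                        (\<Sum>i=1..n. i * (a i + b i)) = n}"

definition psum :: "nat \<Rightarrow> complex list \<Rightarrow> complex" where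
  "psum r X = (\<Sum>x\<leftarrow>X. x ^ r)"

text \<open>A weighted-homogeneous polynomial of degree n is a coefficient function supported on
  wmonoms n. Evaluation of p at \<xi>_i = S_i(X), \<eta>_i = S_i(Y):  P^[p](X|Y).\<close>
definition Pev :: "nat \<Rightarrow> (monom \<Rightarrow> complex) \<Rightarrow> complex list \<Rightarrow> complex list \<Rightarrow> complex" where
  "Pev n p X Y = (\<Sum>m\<in>wmonoms n. p m *
      (\<Prod>i=1..n. psum i X ^ fst m i * psum i Y ^ snd m i))"

text \<open>The space P_n. The pair (N,k) with N/2+k, N/2-k natural corresponds exactly to the
  pair of lengths (length X, length Y), which range over all pairs of naturals.\<close>
definition Pspace :: "nat \<Rightarrow> (monom \<Rightarrow> complex) set" where
  "Pspace n = {p. (\<forall>m. m \<notin> wmonoms n \<longrightarrow> p m = 0) \<and>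
     (\<forall>(N::nat) (k::real) X Y x. N / 2 + k \<in> \<nat> \<and> N / 2 - k \<in> \<nat> \<and>
        real (length X) = N / 2 + k \<and> real (length Y) = N / 2 - k \<longrightarrow>
        Pev n p (X @ [- x]) (x # Y) = Pev n p X Y)}"

definition cdim :: "('a \<Rightarrow> complex) set \<Rightarrow> nat" where
  "cdim V = Vector_Spaces.vector_space.dim (\<lambda>c f x. c * f x) V"

end

theory Submission
  imports Defs "HOL-Computational_Algebra.Fundamental_Theorem_Algebra"
    "HOL-Computational_Algebra.Polynomial_FPS" "HOL-Library.FuncSet"
begin

unbundle fps_syntax

definition Cset :: "nat \<Rightarrow> nat \<Rightarrow> (nat \<Rightarrow> nat) set" where
  "Cset m n = {a. (\<forall>i. i \<notin> {1..m} \<longrightarrow> a i = 0) \<and> (\<Sum>i=1..m. i * a i) = n}"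

lemma finite_Cset: "finite (Cset m n)"
proof (rule finite_subset)
  show "Cset m n \<subseteq> {a. \<forall>x. (x \<in> {1..m} \<longrightarrow> a x \<in> {0..n}) \<and> (x \<notin> {1..m} \<longrightarrow> a x = 0)}"
  proof safe
    fix a x assume a: "a \<in> Cset m n" and x: "x \<in> {1..m}"
    have "a x \<le> x * a x" using x by auto
    also have "\<dots> \<le> (\<Sum>i=1..m. i * a i)" using x by (intro member_le_sum) auto
    finally show "a x \<in> {0..n}" using a by (auto simp: Cset_def)
  next
    fix a x assume "a \<in> Cset m n" "x \<notin> {1..m}" then show "a x = 0" by (auto simp: Cset_def)
  qed
  show "finite {a. \<forall>x. (x \<in> {1..m} \<longrightarrow> a x \<in> {0..n}) \<and> (x \<notin> {1..m} \<longrightarrow> a x = (0::nat))}"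
    by (rule finite_set_of_finite_funs) auto
qed

lemma Cset_0: "Cset 0 n = (if n = 0 then {\<lambda>_. 0} else {})"
  by (auto simp: Cset_def)

lemma Cset_Suc_split:
  "Cset (Suc m) n = Cset m n \<union>
     (if Suc m \<le> n then (\<lambda>b. b(Suc m := Suc (b (Suc m)))) ` Cset (Suc m) (n - Suc m) else {})"
  (is "?L = ?A \<union> ?B")
proof
  show "?L \<subseteq> ?A \<union> ?B"
  proof
    fix a assume a: "a \<in> ?L"
    have sup: "\<And>i. i \<notin> {1..Suc m} \<Longrightarrow> a i = 0" and s: "(\<Sum>i=1..Suc m. i * a i) = n"
      using a by (auto simp: Cset_def)
    have s2: "(\<Sum>i=1..m. i * a i) + Suc m * a (Suc m) = n" using s by simp
    show "a \<in> ?A \<union> ?B"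
    proof (cases "a (Suc m) = 0")
      case True
      have "\<forall>i. i \<notin> {1..m} \<longrightarrow> a i = 0"
      proof (intro allI impI)
        fix i assume i: "i \<notin> {1..m}"
        show "a i = 0"
        proof (cases "i = Suc m")
          case True then show ?thesis using \<open>a (Suc m) = 0\<close> by simp
        next
          case False then have "i \<notin> {1..Suc m}" using i by auto
          then show ?thesis using sup by simp
        qed
      qed
      moreover have "(\<Sum>i=1..m. i * a i) = n" using s2 True by simp
      ultimately have "a \<in> ?A" by (simp add: Cset_def)
      then show ?thesis by blast
    next
      case False
      then obtain k where k: "a (Suc m) = Suc k" by (cases "a (Suc m)") auto
      define b where "b = a(Suc m := k)"
      have le: "Suc m \<le> n"
      proof -
        have "Suc m \<le> Suc m * a (Suc m)" using k by simp
        then show ?thesis using s2 by linarith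
      qed
      have "(\<Sum>i=1..m. i * b i) = (\<Sum>i=1..m. i * a i)" by (intro sum.cong) (auto simp: b_def)
      then have "(\<Sum>i=1..Suc m. i * b i) = (\<Sum>i=1..m. i * a i) + Suc m * k"
        by (simp add: b_def)
      also have "\<dots> = n - Suc m" using s2 k by (simp add: algebra_simps)
      finally have "(\<Sum>i=1..Suc m. i * b i) = n - Suc m" .
      moreover have "\<forall>i. i \<notin> {1..Suc m} \<longrightarrow> b i = 0" using sup by (auto simp: b_def)
      ultimately have "b \<in> Cset (Suc m) (n - Suc m)" by (auto simp: Cset_def)
      moreover have "a = b(Suc m := Suc (b (Suc m)))" using k by (auto simp: b_def)
      ultimately show ?thesis using le by auto
    qed
  qed
next
  show "?A \<union> ?B \<subseteq> ?L"
  proof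
    fix a assume "a \<in> ?A \<union> ?B"
    then show "a \<in> ?L"
    proof
      assume "a \<in> ?A" then show ?thesis by (auto simp: Cset_def)
    next
      assume "a \<in> ?B"
      then obtain b where le: "Suc m \<le> n" and b: "b \<in> Cset (Suc m) (n - Suc m)"
        and ab: "a = b(Suc m := Suc (b (Suc m)))" by (auto split: if_splits)
      have "(\<Sum>i=1..m. i * a i) = (\<Sum>i=1..m. i * b i)" by (intro sum.cong) (auto simp: ab)
      then have "(\<Sum>i=1..Suc m. i * a i) = (\<Sum>i=1..Suc m. i * b i) + Suc m" by (simp add: ab)
      also have "\<dots> = n" using b le by (simp add: Cset_def)
      finally show ?thesis using b by (auto simp: Cset_def ab)
    qed
  qed
qed

lemma card_Cset_Suc:
  "card (Cset (Suc m) n) = card (Cset m n) + (if Suc m \<le> n then card (Cset (Suc m) (n - Suc m)) else 0)"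
proof -
  have disj: "Cset m n \<inter> (\<lambda>b. b(Suc m := Suc (b (Suc m)))) ` Cset (Suc m) (n - Suc m) = {}"
    by (fastforce simp: Cset_def dest: spec[of _ "Suc m"])
  have inj: "inj (\<lambda>b::nat\<Rightarrow>nat. b(Suc m := Suc (b (Suc m))))"
  proof (rule injI)
    fix b1 b2 :: "nat \<Rightarrow> nat"
    assume h: "b1(Suc m := Suc (b1 (Suc m))) = b2(Suc m := Suc (b2 (Suc m)))"
    show "b1 = b2"
    proof
      fix i show "b1 i = b2 i" using fun_cong[OF h, of i] by (cases "i = Suc m") auto
    qed
  qed
  show ?thesis
    by (subst Cset_Suc_split, cases "Suc m \<le> n")
       (auto simp: card_Un_disjoint finite_Cset disj card_image inj_on_subset[OF inj])
qed

definition Pm :: "nat \<Rightarrow> complex fps" where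
  "Pm m = (\<Prod>k=1..m. inverse (1 - fps_X ^ k :: complex fps))"

lemma Pm_Suc: "Pm (Suc m) * (1 - fps_X ^ Suc m) = Pm m"
proof -
  have "inverse (1 - fps_X ^ Suc m :: complex fps) * (1 - fps_X ^ Suc m) = 1"
    by (rule inverse_mult_eq_1) simp
  then show ?thesis unfolding Pm_def by (simp add: prod.cl_ivl_Suc mult.assoc)
qed

lemma mult_1_minus_Xpow_nth: "(P * (1 - fps_X ^ k :: complex fps)) $ n = P $ n - (if n < k then 0 else P $ (n - k))"
proof -
  have "P * (1 - fps_X ^ k) = P - P * fps_X ^ k" by (simp add: right_diff_distrib)
  then show ?thesis by (simp add: fps_X_power_mult_right_nth)
qed

lemma Pm_nth: "Pm m $ n = of_nat (card (Cset m n))"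
proof (induction m arbitrary: n)
  case 0
  then show ?case by (simp add: Pm_def Cset_0)
next
  case (Suc m)
  show ?case
  proof (induction n rule: less_induct)
    case (less n)
    have "Pm m $ n = (Pm (Suc m) * (1 - fps_X ^ Suc m)) $ n" by (simp only: Pm_Suc)
    also have "\<dots> = Pm (Suc m) $ n - (if n < Suc m then 0 else Pm (Suc m) $ (n - Suc m))"
      by (rule mult_1_minus_Xpow_nth)
    finally have "Pm (Suc m) $ n = Pm m $ n + (if n < Suc m then 0 else Pm (Suc m) $ (n - Suc m))"
      by (simp add: algebra_simps)
    also have "\<dots> = of_nat (card (Cset (Suc m) n))"
    proof (cases "n < Suc m")
      case True
      have "card (Cset (Suc m) n) = card (Cset m n)" using card_Cset_Suc[of m n] True by simp
      then show ?thesis using True Suc.IH[of n] by simp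
    next
      case False
      have c: "card (Cset (Suc m) n) = card (Cset m n) + card (Cset (Suc m) (n - Suc m))"
        using card_Cset_Suc[of m n] False by simp
      have "Pm (Suc m) $ (n - Suc m) = of_nat (card (Cset (Suc m) (n - Suc m)))"
        by (rule less.IH) (use False in simp)
      then show ?thesis using False Suc.IH[of n] by (simp add: c)
    qed
    finally show ?case .
  qed
qed

lemma Cset_mono: assumes nm: "n \<le> m" shows "Cset m n = Cset n n"
proof -
  have A: "a i = 0" if "(\<Sum>i=1..m. i * a i) = n" "i \<in> {1..m}" "n < i" for a i
  proof (rule ccontr)
    assume "a i \<noteq> 0"
    then have "i \<le> i * a i" by simp
    also have "\<dots> \<le> (\<Sum>i=1..m. i * a i)" using that by (intro member_le_sum) auto
    finally show False using that by auto
  qed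
  have B: "(\<Sum>i=1..m. i * a i) = (\<Sum>i=1..n. i * a i)" if "\<forall>i. i \<notin> {1..n} \<longrightarrow> a i = 0" for a
    using nm that by (intro sum.mono_neutral_right) auto
  show ?thesis
  proof (rule set_eqI)
    fix a
    show "a \<in> Cset m n \<longleftrightarrow> a \<in> Cset n n"
    proof
      assume h: "a \<in> Cset m n"
      have sm: "(\<Sum>i=1..m. i * a i) = n" and supm: "\<forall>i. i \<notin> {1..m} \<longrightarrow> a i = 0"
        using h by (auto simp: Cset_def)
      have supn: "\<forall>i. i \<notin> {1..n} \<longrightarrow> a i = 0"
      proof (intro allI impI)
        fix i assume i: "i \<notin> {1..n}"
        show "a i = 0"
        proof (cases "i \<in> {1..m}")
          case True
          then have "n < i" using i by auto
          then show ?thesis using A[OF sm True] by simp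
        next
          case False then show ?thesis using supm by auto
        qed
      qed
      show "a \<in> Cset n n" using B[OF supn] sm supn by (simp add: Cset_def)
    next
      assume h: "a \<in> Cset n n"
      have sn: "(\<Sum>i=1..n. i * a i) = n" and supn: "\<forall>i. i \<notin> {1..n} \<longrightarrow> a i = 0"
        using h by (auto simp: Cset_def)
      have supm: "\<forall>i. i \<notin> {1..m} \<longrightarrow> a i = 0" using supn nm by auto
      show "a \<in> Cset m n" using B[OF supn] sn supm by (simp add: Cset_def)
    qed
  qed
qed

lemma Pm_lim: "(\<lambda>m. \<Prod>k=1..m. inverse (1 - fps_X ^ k :: complex fps))
           \<longlonglongrightarrow> Abs_fps (\<lambda>n. of_nat (card (Cset n n)))"
proof (rule tendsto_fpsI)
  fix n
  show "\<forall>\<^sub>F x in sequentially. (\<Prod>k = 1..x. inverse (1 - fps_X ^ k)) $ n = (Abs_fps (\<lambda>n. of_nat (card (Cset n n))) :: complex fps) $ n"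
    using eventually_ge_at_top[of n]
  proof eventually_elim
    case (elim x)
    then show ?case using Pm_nth[unfolded Pm_def, of x n] Cset_mono[OF elim] by simp
  qed
qed




lemma univ_ident:
  fixes A :: "nat \<Rightarrow> complex"
  assumes K: "finite K" and z: "\<And>t. (\<Sum>k\<in>K. A k * t ^ k) = 0" and k: "k \<in> K"
  shows "A k = 0"
proof -
  define p where "p = (\<Sum>k\<in>K. monom (A k) k)"
  have "\<forall>t. poly p t = 0" using z by (simp add: p_def poly_sum poly_monom)
  then have "p = 0" by (simp add: poly_all_0_iff_0)
  then have "coeff p k = 0" by simp
  moreover have "coeff p k = A k"
    unfolding p_def coeff_sum coeff_monom using K k
    by (simp add: sum.delta)
  ultimately show ?thesis by simp
qed

lemma poly_ident:
  fixes c :: "('i \<Rightarrow> nat) \<Rightarrow> complex"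
  assumes "finite I"
  shows "finite M \<Longrightarrow> (\<forall>e\<in>M. \<forall>i. i \<notin> I \<longrightarrow> e i = 0) \<Longrightarrow>
         (\<forall>z. (\<Sum>e\<in>M. c e * (\<Prod>i\<in>I. z i ^ e i)) = 0) \<Longrightarrow> e \<in> M \<Longrightarrow> c e = 0"
  using assms
proof (induction I arbitrary: M c e rule: finite_induct)
  case empty
  then have "\<forall>x\<in>M. x = (\<lambda>_. 0)" by auto
  then have "M = {e}" using empty by (metis (no_types, lifting) empty_iff insertI1 subsetI subset_antisym singleton_iff)
  then show ?case using empty by simp
next
  case (insert j I M c e)
  define A where "A k (z::'i \<Rightarrow> complex) = (\<Sum>e\<in>{e\<in>M. e j = k}. c e * (\<Prod>i\<in>I. z i ^ e i))" for k z
  define K where "K = (\<lambda>e. e j) ` M"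
  have fK: "finite K" using insert by (simp add: K_def)
  have split: "(\<Sum>e\<in>M. c e * (\<Prod>i\<in>insert j I. z i ^ e i)) = (\<Sum>k\<in>K. A k z * z j ^ k)" for z
  proof -
    have "(\<Sum>e\<in>M. c e * (\<Prod>i\<in>insert j I. z i ^ e i)) =
          (\<Sum>k\<in>K. \<Sum>e\<in>{e\<in>M. e j = k}. c e * (\<Prod>i\<in>insert j I. z i ^ e i))"
      by (rule sum.group[symmetric]) (use insert fK in \<open>auto simp: K_def\<close>)
    also have "\<dots> = (\<Sum>k\<in>K. A k z * z j ^ k)"
      unfolding A_def sum_distrib_right
      by (intro sum.cong refl) (use insert in \<open>auto simp: mult_ac\<close>)
    finally show ?thesis .
  qed
  have A0: "A k z = 0" if "k \<in> K" for k z
  proof -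
    have AI: "A k' (z(j := t)) = A k' z" for k' t
      unfolding A_def using insert by (intro sum.cong refl arg_cong2[where f="(*)"] prod.cong) auto
    have "(\<Sum>k\<in>K. A k z * t ^ k) = 0" for t
      using insert.prems(3)[rule_format, of "z(j:=t)"] unfolding split AI by simp
    then show ?thesis using univ_ident[OF fK _ that, of "\<lambda>k. A k z"] by blast
  qed
  define k where "k = e j"
  define M' where "M' = (\<lambda>e. e(j := 0)) ` {e\<in>M. e j = k}"
  define c' where "c' e' = c (e'(j := k))" for e'
  have inj: "inj_on (\<lambda>e. e(j := 0)) {e\<in>M. e j = k}"
    by (rule inj_onI) (metis (mono_tags, lifting) fun_upd_idem_iff fun_upd_upd mem_Collect_eq)
  have "c' (e(j := 0)) = 0"
  proof (rule insert.IH)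
    show "finite M'" using insert by (simp add: M'_def)
    show "\<forall>e\<in>M'. \<forall>i. i \<notin> I \<longrightarrow> e i = 0" using insert by (auto simp: M'_def)
    show "e(j := 0) \<in> M'" using insert by (auto simp: M'_def k_def)
    show "\<forall>z. (\<Sum>e\<in>M'. c' e * (\<Prod>i\<in>I. z i ^ e i)) = 0"
    proof
      fix z
      have "(\<Sum>e\<in>M'. c' e * (\<Prod>i\<in>I. z i ^ e i)) =
            (\<Sum>e\<in>{e\<in>M. e j = k}. c' (e(j:=0)) * (\<Prod>i\<in>I. z i ^ (e(j:=0)) i))"
        unfolding M'_def by (rule sum.reindex[OF inj, unfolded comp_def])
      also have "\<dots> = A k z" unfolding A_def c'_def
        using insert by (intro sum.cong refl arg_cong2[where f="(*)"] prod.cong) 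
          (auto intro!: arg_cong[where f=c])
      also have "\<dots> = 0" using A0 insert by (auto simp: K_def k_def)
      finally show "(\<Sum>e\<in>M'. c' e * (\<Prod>i\<in>I. z i ^ e i)) = 0" .
    qed
  qed
  then show ?case by (simp add: c'_def k_def)
qed



unbundle fps_syntax

definition Efps :: "complex list \<Rightarrow> complex fps" where
  "Efps X = (\<Prod>x\<leftarrow>X. 1 + fps_const x * fps_X)"

definition PSfps :: "complex list \<Rightarrow> complex fps" where
  "PSfps X = Abs_fps (\<lambda>r. if r = 0 then 0 else (-1) ^ (r - 1) * psum r X)"

definition Gfps :: "complex \<Rightarrow> complex fps" where
  "Gfps x = Abs_fps (\<lambda>r. if r = 0 then 0 else (-1) ^ (r - 1) * x ^ r)"

lemma Gfps_key: "(1 + fps_const x * fps_X) * Gfps x = fps_const x * fps_X"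
proof (rule fps_ext)
  fix n
  have "(1 + fps_const x * fps_X) * Gfps x = Gfps x + fps_const x * (fps_X * Gfps x)"
    by (simp add: algebra_simps)
  moreover have "(Gfps x + fps_const x * (fps_X * Gfps x)) $ n = (fps_const x * fps_X) $ n"
  proof (cases n)
    case 0 then show ?thesis by (simp add: Gfps_def)
  next
    case (Suc m)
    then show ?thesis by (cases m) (auto simp: Gfps_def fps_X_mult_right_nth)
  qed
  ultimately show "((1 + fps_const x * fps_X) * Gfps x) $ n = (fps_const x * fps_X) $ n" by simp
qed

lemma PSfps_Cons: "PSfps (x # X) = Gfps x + PSfps X"
  by (rule fps_ext) (simp add: PSfps_def Gfps_def psum_def algebra_simps)

lemma Efps_Cons: "Efps (x # X) = (1 + fps_const x * fps_X) * Efps X"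
  by (simp add: Efps_def)

lemma newton: "fps_X * fps_deriv (Efps X) = Efps X * PSfps X"
proof (induction X)
  case Nil
  then show ?case by (simp add: Efps_def PSfps_def psum_def fps_eq_iff)
next
  case (Cons x X)
  let ?a = "1 + fps_const x * fps_X" and ?E = "Efps X" and ?P = "PSfps X"
  have "fps_X * fps_deriv (Efps (x # X)) = fps_X * (?a * fps_deriv ?E + fps_const x * ?E)"
    by (simp add: Efps_Cons)
  also have "\<dots> = ?a * (fps_X * fps_deriv ?E) + fps_const x * fps_X * ?E"
    by (simp add: algebra_simps)
  also have "\<dots> = ?a * ?E * ?P + ?E * (?a * Gfps x)"
    by (simp only: Cons Gfps_key) (simp add: algebra_simps)
  also have "\<dots> = Efps (x # X) * PSfps (x # X)"
    by (simp add: Efps_Cons PSfps_Cons algebra_simps)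
  finally show ?case .
qed

lemma Efps_0: "Efps X $ 0 = 1"
  by (induction X) (simp_all add: Efps_def)

function ecoef :: "(nat \<Rightarrow> complex) \<Rightarrow> nat \<Rightarrow> complex" where
  "ecoef t k = (if k = 0 then 1 else (\<Sum>i\<in>{1..k}. t i * ecoef t (k - i)) / of_nat k)"
  by pat_completeness auto
termination by (relation "measure snd") auto

declare ecoef.simps[simp del]

lemma ecoef_ode:
  fixes t :: "nat \<Rightarrow> complex"
  assumes t0: "t 0 = 0"
  shows "fps_X * fps_deriv (Abs_fps (ecoef t)) = Abs_fps (ecoef t) * Abs_fps t"
proof (rule fps_ext)
  fix n
  show "(fps_X * fps_deriv (Abs_fps (ecoef t))) $ n = (Abs_fps (ecoef t) * Abs_fps t) $ n"
  proof (cases n)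
    case 0 then show ?thesis by (simp add: fps_mult_nth t0)
  next
    case (Suc m)
    have "(Abs_fps (ecoef t) * Abs_fps t) $ n = (Abs_fps t * Abs_fps (ecoef t)) $ n"
      by (simp add: mult.commute)
    also have "\<dots> = (\<Sum>i=0..n. t i * ecoef t (n - i))" by (simp add: fps_mult_nth)
    also have "\<dots> = (\<Sum>i=1..n. t i * ecoef t (n - i))"
      using Suc by (subst sum.atLeast_Suc_atMost) (auto simp: t0)
    also have "\<dots> = of_nat n * ecoef t n"
    proof -
      have nz: "of_nat n \<noteq> (0::complex)" using Suc by (metis of_nat_eq_0_iff nat.distinct(1))
      have "ecoef t n = (\<Sum>i=1..n. t i * ecoef t (n - i)) / of_nat n"
        using Suc by (subst ecoef.simps) simp
      then show ?thesis using nz by simp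
    qed
    finally show ?thesis using Suc by simp
  qed
qed

lemma lin_factor:
  assumes "r \<noteq> (0::complex)"
  shows "fps_X - fps_const r = fps_const (-r) * (1 + fps_const (-1/r) * fps_X)"
proof -
  have "fps_const (-r) * (1 + fps_const (-1/r) * fps_X) = fps_const (-r) + fps_const ((-r) * (-1/r)) * fps_X"
    by (simp add: algebra_simps fps_const_mult[symmetric] del: fps_const_mult)
  also have "(-r) * (-1/r) = 1" using assms by simp
  finally show ?thesis by simp
qed

lemma prod_lin:
  assumes "\<forall>r\<in>set rs. r \<noteq> (0::complex)"
  shows "(\<Prod>r\<leftarrow>rs. fps_X - fps_const r) = fps_const (\<Prod>r\<leftarrow>rs. -r) * Efps (map (\<lambda>r. -1/r) rs)"
  using assms
proof (induction rs)
  case Nil then show ?case by (simp add: Efps_def)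
next
  case (Cons r rs)
  let ?P = "\<Prod>r\<leftarrow>rs. -r" and ?E = "Efps (map (\<lambda>r. -1/r) rs)"
  have "(\<Prod>r\<leftarrow>r#rs. fps_X - fps_const r) = (fps_X - fps_const r) * (fps_const ?P * ?E)"
    using Cons by simp
  also have "\<dots> = fps_const (-r) * (1 + fps_const (-1/r) * fps_X) * (fps_const ?P * ?E)"
    using lin_factor Cons by simp
  also have "\<dots> = (fps_const (-r) * fps_const ?P) * ((1 + fps_const (-1/r) * fps_X) * ?E)"
    by (simp only: mult_ac)
  also have "\<dots> = fps_const (\<Prod>r\<leftarrow>r#rs. -r) * Efps (map (\<lambda>r. -1/r) (r#rs))"
    by (simp only: list.map prod_list.Cons Efps_Cons fps_const_mult)
  finally show ?case .
qed

lemma factor_poly: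
  fixes q :: "complex poly"
  assumes q0: "coeff q 0 = 1"
  shows "\<exists>X. fps_of_poly q = Efps X"
proof -
  obtain rs where rs: "mset rs = proots q" using ex_mset by blast
  have q: "q = smult (lead_coeff q) (\<Prod>r\<leftarrow>rs. [:-r, 1:])"
    using complex_poly_decompose_multiset[of q] rs by (simp add: prod_mset_prod_list[symmetric])
  have nz: "\<forall>r\<in>set rs. r \<noteq> 0"
  proof
    fix r assume r: "r \<in> set rs"
    have pz: "poly (\<Prod>r'\<leftarrow>rs'. [:-r', 1:]) r = 0" if "r \<in> set rs'" for rs'
      using that by (induction rs') auto
    have "poly q r = lead_coeff q * poly (\<Prod>r'\<leftarrow>rs. [:-r', 1:]) r"
      by (subst q) simp
    also have "\<dots> = 0" using pz[OF r] by simp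
    finally have "poly q r = 0" .
    moreover have "poly q 0 = 1" using q0 by (simp add: poly_0_coeff_0)
    ultimately show "r \<noteq> 0" by auto
  qed
  define X where "X = map (\<lambda>r. -1/r) rs"
  have "fps_of_poly q = fps_const (lead_coeff q) * (\<Prod>r\<leftarrow>rs. fps_X - fps_const r)"
    by (subst q) (simp add: fps_of_poly_smult fps_of_poly_prod_list o_def fps_of_poly_linear fps_const_neg[symmetric] del: fps_const_neg)
  also have "\<dots> = fps_const (lead_coeff q * (\<Prod>r\<leftarrow>rs. -r)) * Efps X"
    using prod_lin[OF nz] by (simp add: X_def mult.assoc)
  finally have eq: "fps_of_poly q = fps_const (lead_coeff q * (\<Prod>r\<leftarrow>rs. -r)) * Efps X" .
  have "coeff q 0 = lead_coeff q * (\<Prod>r\<leftarrow>rs. -r)"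
    using arg_cong[OF eq, of "\<lambda>f. f $ 0"] by (simp add: Efps_0)
  then have "fps_of_poly q = Efps X" using eq q0 by simp
  then show ?thesis by blast
qed

lemma psum_surj:
  fixes s :: "nat \<Rightarrow> complex"
  shows "\<exists>X. \<forall>r\<in>{1..n}. psum r X = s r"
proof -
  define t where "t r = (if r = 0 then 0 else (-1) ^ (r - 1) * s r)" for r
  define E where "E = Abs_fps (ecoef t)"
  define q where "q = (\<Sum>k\<le>n. monom (ecoef t k) k)"
  have cq: "coeff q k = (if k \<le> n then ecoef t k else 0)" for k
    by (simp add: q_def coeff_sum coeff_monom)
  have "coeff q 0 = 1" by (simp add: cq ecoef.simps)
  then obtain X where X: "fps_of_poly q = Efps X" using factor_poly by blast
  have agree: "Efps X $ k = E $ k" if "k \<le> n" for k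
    using that arg_cong[OF X, of "\<lambda>f. f $ k"] by (simp add: cq E_def)
  have E0: "E $ 0 = 1" by (simp add: E_def ecoef.simps)
  have odeE: "fps_X * fps_deriv E = E * Abs_fps t" unfolding E_def by (rule ecoef_ode) (simp add: t_def)
  have main: "PSfps X $ r = t r" if "r \<le> n" for r
    using that
  proof (induction r rule: less_induct)
    case (less r)
    show ?case
    proof (cases r)
      case 0 then show ?thesis by (simp add: PSfps_def t_def)
    next
      case (Suc r')
      have "(fps_X * fps_deriv (Efps X)) $ r = (fps_X * fps_deriv E) $ r"
        using less.prems agree[of r] Suc by simp
      then have "(PSfps X * Efps X) $ r = (Abs_fps t * E) $ r"
        by (simp only: newton odeE mult.commute)
      then have eq1: "(\<Sum>i=0..r. PSfps X $ i * Efps X $ (r - i)) = (\<Sum>i=0..r. t i * E $ (r - i))"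
        by (simp add: fps_mult_nth)
      have sc: "(\<Sum>i=0..r'. PSfps X $ i * Efps X $ (r - i)) = (\<Sum>i=0..r'. t i * E $ (r - i))"
        by (rule sum.cong) (use Suc less agree in auto)
      moreover have "(\<Sum>i=0..r. PSfps X $ i * Efps X $ (r - i)) = (\<Sum>i=0..r'. PSfps X $ i * Efps X $ (r - i)) + PSfps X $ r"
        using Suc by (simp add: Efps_0 sum.cl_ivl_Suc)
      moreover have "(\<Sum>i=0..r. t i * E $ (r - i)) = (\<Sum>i=0..r'. t i * E $ (r - i)) + t r"
        using Suc E0 by (simp add: sum.cl_ivl_Suc)
      ultimately show ?thesis using eq1 by simp
    qed
  qed
  have "psum r X = s r" if "r \<in> {1..n}" for r
    using main[of r] that by (simp add: PSfps_def t_def)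
  then show ?thesis by blast
qed




definition Fval :: "nat \<Rightarrow> (monom \<Rightarrow> complex) \<Rightarrow> (nat \<Rightarrow> complex) \<Rightarrow> (nat \<Rightarrow> complex) \<Rightarrow> complex" where
  "Fval n p \<xi> \<eta> = (\<Sum>m\<in>wmonoms n. p m * (\<Prod>i=1..n. \<xi> i ^ fst m i * \<eta> i ^ snd m i))"

lemma Pev_Fval: "Pev n p X Y = Fval n p (\<lambda>i. psum i X) (\<lambda>i. psum i Y)"
  by (simp add: Pev_def Fval_def)

lemma Fval_cong:
  assumes "\<And>i. i \<in> {1..n} \<Longrightarrow> \<xi> i = \<xi>' i" "\<And>i. i \<in> {1..n} \<Longrightarrow> \<eta> i = \<eta>' i"
  shows "Fval n p \<xi> \<eta> = Fval n p \<xi>' \<eta>'"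
  unfolding Fval_def using assms by (intro sum.cong refl arg_cong2[where f="(*)"] prod.cong) auto

lemma sum_fun_apply: "(\<Sum>a\<in>A. f a) x = (\<Sum>a\<in>A. f a x)"
  by (induction A rule: infinite_finite_induct) auto

lemma finite_wmonoms: "finite (wmonoms n)"
proof -
  define B where "B = {a::nat\<Rightarrow>nat. \<forall>x. (x \<in> {1..n} \<longrightarrow> a x \<in> {0..n}) \<and> (x \<notin> {1..n} \<longrightarrow> a x = 0)}"
  have "finite B" unfolding B_def by (rule finite_set_of_finite_funs) auto
  moreover have "wmonoms n \<subseteq> B \<times> B"
  proof safe
    fix a b assume m: "(a, b) \<in> wmonoms n"
    have le: "a x + b x \<le> n" if "x \<in> {1..n}" for x
    proof -
      have "a x + b x \<le> x * (a x + b x)" using that by auto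
      also have "\<dots> \<le> (\<Sum>i=1..n. i * (a i + b i))" using that by (intro member_le_sum) auto
      finally show ?thesis using m by (simp add: wmonoms_def)
    qed
    show "a \<in> B" "b \<in> B" using m le by (fastforce simp: B_def wmonoms_def)+
  qed
  ultimately show ?thesis by (meson finite_SigmaI finite_subset)
qed

lemma Pspace_iff:
  "p \<in> Pspace n \<longleftrightarrow> (\<forall>m. m \<notin> wmonoms n \<longrightarrow> p m = 0) \<and>
     (\<forall>X Y x. Pev n p (X @ [- x]) (x # Y) = Pev n p X Y)"
proof
  assume p: "p \<in> Pspace n"
  have "Pev n p (X @ [- x]) (x # Y) = Pev n p X Y" for X Y x
  proof -
    define N where "N = length X + length Y"
    define k where "k = (real (length X) - real (length Y)) / 2"
    have a: "real N / 2 + k = real (length X)" "real N / 2 - k = real (length Y)"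
      by (simp_all add: N_def k_def field_simps)
    show ?thesis using p a unfolding Pspace_def
      by (auto simp del: of_nat_add) (metis of_nat_in_Nats)
  qed
  then show "(\<forall>m. m \<notin> wmonoms n \<longrightarrow> p m = 0) \<and> (\<forall>X Y x. Pev n p (X @ [- x]) (x # Y) = Pev n p X Y)"
    using p by (simp add: Pspace_def)
next
  assume "(\<forall>m. m \<notin> wmonoms n \<longrightarrow> p m = 0) \<and> (\<forall>X Y x. Pev n p (X @ [- x]) (x # Y) = Pev n p X Y)"
  then show "p \<in> Pspace n" by (simp add: Pspace_def)
qed

lemma psum_append: "psum i (X @ Y) = psum i X + psum i Y"
  by (simp add: psum_def)

lemma psum_Cons: "psum i (x # Y) = x ^ i + psum i Y"
  by (simp add: psum_def)

lemma psum_Nil: "psum i [] = 0"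
  by (simp add: psum_def)

lemma psum_uminus: "psum i (map uminus Z) = (-1) ^ i * psum i Z"
proof (induction Z)
  case Nil then show ?case by (simp add: psum_Nil)
next
  case (Cons z Z)
  have "(- z) ^ i = (-1) ^ i * z ^ i" by (rule power_minus)
  then show ?case using Cons by (simp add: psum_Cons distrib_left)
qed

lemma Pev_iter:
  assumes p: "p \<in> Pspace n"
  shows "Pev n p (map uminus Z @ X) (Z @ Y) = Pev n p X Y"
proof (induction Z)
  case Nil then show ?case by simp
next
  case (Cons z Z)
  have "Pev n p (map uminus (z # Z) @ X) ((z # Z) @ Y) = Pev n p ((map uminus Z @ X) @ [- z]) (z # (Z @ Y))"
    unfolding Pev_Fval by (simp add: psum_append psum_Cons psum_Nil algebra_simps)
  also have "\<dots> = Pev n p (map uminus Z @ X) (Z @ Y)"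
    by (rule conjunct2[OF p[unfolded Pspace_iff], rule_format])
  finally show ?case using Cons by simp
qed

lemma Fval_zero:
  assumes p: "p \<in> Pspace n" and z: "\<And>a. p (a, \<lambda>_. 0) = 0"
  shows "Fval n p \<xi> \<eta> = 0"
proof -
  obtain Z where Z: "\<forall>r\<in>{1..n}. psum r Z = \<eta> r" using psum_surj[of n \<eta>] by blast
  obtain X where X: "\<forall>r\<in>{1..n}. psum r X = \<xi> r - (-1) ^ r * \<eta> r"
    using psum_surj[of n "\<lambda>r. \<xi> r - (-1) ^ r * \<eta> r"] by blast
  have "Fval n p \<xi> \<eta> = Pev n p (map uminus Z @ X) (Z @ [])"
    unfolding Pev_Fval using X Z by (intro Fval_cong) (auto simp: psum_append psum_uminus)
  also have "\<dots> = Pev n p X []" by (rule Pev_iter[OF p])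
  also have "\<dots> = 0" unfolding Pev_Fval Fval_def
  proof (intro sum.neutral ballI)
    fix m assume m: "m \<in> wmonoms n"
    show "p m * (\<Prod>i = 1..n. psum i X ^ fst m i * psum i [] ^ snd m i) = 0"
    proof (cases "\<exists>i\<in>{1..n}. snd m i \<noteq> 0")
      case True
      then show ?thesis by (auto simp: psum_Nil)
    next
      case False
      have "snd m i = 0" for i
      proof (cases "i \<in> {1..n}")
        case True then show ?thesis using False by auto
      next
        case F: False then show ?thesis using m by (auto simp: wmonoms_def)
      qed
      then have "snd m = (\<lambda>_. 0)" by auto
      then have "m = (fst m, \<lambda>_. 0)" by (metis prod.collapse)
      then show ?thesis using z by (metis mult_zero_left)
    qed
  qed
  finally show ?thesis .
qed

definition enc :: "monom \<Rightarrow> (nat + nat \<Rightarrow> nat)" where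
  "enc m = case_sum (fst m) (snd m)"

lemma enc_inj: "inj enc"
proof (rule injI)
  fix m m' assume "enc m = enc m'"
  then have "\<forall>i. fst m i = fst m' i \<and> snd m i = snd m' i"
    unfolding enc_def by (metis sum.case)
  then show "m = m'" by (simp add: prod_eq_iff fun_eq_iff)
qed

lemma Fval_enc:
  "(\<Prod>i\<in>Inl ` {1..n} \<union> Inr ` {1..n}. z i ^ enc m i) =
   (\<Prod>i=1..n. (z \<circ> Inl) i ^ fst m i * (z \<circ> Inr) i ^ snd m i)"
proof -
  have "(\<Prod>i\<in>Inl ` {1..n} \<union> Inr ` {1..n}. z i ^ enc m i) =
        (\<Prod>i\<in>Inl ` {1..n}. z i ^ enc m i) * (\<Prod>i\<in>Inr ` {1..n}. z i ^ enc m i)"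
    by (rule prod.union_disjoint) auto
  also have "(\<Prod>i\<in>Inl ` {1..n}. z i ^ enc m i) = (\<Prod>i=1..n. z (Inl i) ^ fst m i)"
    by (simp add: prod.reindex enc_def)
  also have "(\<Prod>i\<in>Inr ` {1..n}. z i ^ enc m i) = (\<Prod>i=1..n. z (Inr i) ^ snd m i)"
    by (simp add: prod.reindex enc_def)
  finally show ?thesis by (simp add: prod.distrib)
qed

lemma upper:
  assumes p: "p \<in> Pspace n" and z: "\<And>a. p (a, \<lambda>_. 0) = 0"
  shows "p = 0"
proof
  fix m
  show "p m = 0 m"
  proof (cases "m \<in> wmonoms n")
    case False
    have "\<forall>m. m \<notin> wmonoms n \<longrightarrow> p m = 0" by (rule conjunct1[OF p[unfolded Pspace_iff]])
    then have "p m = 0" using False by blast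
    then show ?thesis by simp
  next
    case True
    let ?I = "Inl ` {1..n} \<union> Inr ` {1..n} :: (nat + nat) set"
    let ?c = "\<lambda>e. p (e \<circ> Inl, e \<circ> Inr)"
    have "?c (enc m) = 0"
    proof (rule poly_ident[of ?I "enc ` wmonoms n"])
      show "finite ?I" by simp
      show "finite (enc ` wmonoms n)" by (simp add: finite_wmonoms)
      show "enc m \<in> enc ` wmonoms n" using True by simp
      show "\<forall>e\<in>enc ` wmonoms n. \<forall>i. i \<notin> ?I \<longrightarrow> e i = 0"
      proof (intro ballI allI impI)
        fix e i assume e: "e \<in> enc ` wmonoms n" and i: "i \<notin> ?I"
        then obtain m' where m': "m' \<in> wmonoms n" and em: "e = enc m'" by blast
        have sm: "\<forall>i. i \<notin> {1..n} \<longrightarrow> fst m' i = 0 \<and> snd m' i = 0"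
          using m' by (cases m') (simp add: wmonoms_def)
        show "e i = 0"
        proof (cases i)
          case (Inl a)
          then have "a \<notin> {1..n}" using i by auto
          then show ?thesis using sm Inl em by (simp add: enc_def)
        next
          case (Inr a)
          then have "a \<notin> {1..n}" using i by auto
          then show ?thesis using sm Inr em by (simp add: enc_def)
        qed
      qed
      show "\<forall>z. (\<Sum>e\<in>enc ` wmonoms n. ?c e * (\<Prod>i\<in>?I. z i ^ e i)) = 0"
      proof
        fix z :: "nat + nat \<Rightarrow> complex"
        have "(\<Sum>e\<in>enc ` wmonoms n. ?c e * (\<Prod>i\<in>?I. z i ^ e i)) =
              (\<Sum>m\<in>wmonoms n. ?c (enc m) * (\<Prod>i\<in>?I. z i ^ enc m i))"
          by (rule sum.reindex[OF inj_on_subset[OF enc_inj], unfolded comp_def]) simp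
        also have "\<dots> = Fval n p (z \<circ> Inl) (z \<circ> Inr)"
          unfolding Fval_def Fval_enc
          by (intro sum.cong refl) (simp add: enc_def o_def)
        also have "\<dots> = 0" by (rule Fval_zero[OF p z])
        finally show "(\<Sum>e\<in>enc ` wmonoms n. ?c e * (\<Prod>i\<in>?I. z i ^ e i)) = 0" .
      qed
    qed
    moreover have "(enc m \<circ> Inl, enc m \<circ> Inr) = m" by (simp add: enc_def o_def)
    ultimately show ?thesis by simp
  qed
qed


definition cc :: "nat \<Rightarrow> complex" where "cc i = - ((-1) ^ i)"

definition gfun :: "nat \<Rightarrow> (nat \<Rightarrow> nat) \<Rightarrow> monom \<Rightarrow> complex" where
  "gfun n a m = (if m \<in> wmonoms n \<and> (\<forall>i. fst m i + snd m i = a i)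
     then (\<Prod>i=1..n. of_nat (a i choose snd m i) * cc i ^ snd m i) else 0)"

lemma wmonoms_0: "(a, \<lambda>_. 0) \<in> wmonoms n \<longleftrightarrow> a \<in> Cset n n"
  by (simp add: wmonoms_def Cset_def)

lemma gfun_at0:
  assumes "a \<in> Cset n n"
  shows "gfun n a (a', \<lambda>_. 0) = (if a' = a then 1 else 0)"
proof (cases "a' = a")
  case True
  then show ?thesis using assms by (simp add: gfun_def wmonoms_0)
next
  case False
  then have "\<not> (\<forall>i. a' i + 0 = a i)" by auto
  then show ?thesis using False by (simp add: gfun_def)
qed

lemma gfun_Fval:
  assumes a: "a \<in> Cset n n"
  shows "Fval n (gfun n a) \<xi> \<eta> = (\<Prod>i=1..n. (\<xi> i + cc i * \<eta> i) ^ a i)"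
proof -
  have asup: "\<And>i. i \<notin> {1..n} \<Longrightarrow> a i = 0" and asum: "(\<Sum>i=1..n. i * a i) = n"
    using a by (auto simp: Cset_def)
  define f where "f i k = of_nat (a i choose k) * (cc i * \<eta> i) ^ k * \<xi> i ^ (a i - k)" for i k
  define S where "S = {m\<in>wmonoms n. \<forall>i. fst m i + snd m i = a i}"
  define kz where "kz k = (\<lambda>i. if i \<in> {1..n} then k i else 0)" for k :: "nat \<Rightarrow> nat"
  define \<phi> where "\<phi> k = (\<lambda>i. a i - kz k i, kz k)" for k
  define \<psi> where "\<psi> m = restrict (snd m) {1..n}" for m :: monom
  let ?P = "PiE {1..n} (\<lambda>i. {..a i})"
  have "(\<Prod>i=1..n. (\<xi> i + cc i * \<eta> i) ^ a i) = (\<Prod>i=1..n. \<Sum>k\<le>a i. f i k)"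
  proof (intro prod.cong refl)
    fix i
    have "\<xi> i + cc i * \<eta> i = cc i * \<eta> i + \<xi> i" by (rule add.commute)
    then show "(\<xi> i + cc i * \<eta> i) ^ a i = (\<Sum>k\<le>a i. f i k)"
      by (simp only:) (simp add: f_def binomial_ring)
  qed
  also have "\<dots> = (\<Sum>k\<in>?P. \<Prod>i=1..n. f i (k i))"
    by (rule prod_sum_PiE) auto
  also have "\<dots> = (\<Sum>k\<in>?P. gfun n a (\<phi> k) * (\<Prod>i=1..n. \<xi> i ^ fst (\<phi> k) i * \<eta> i ^ snd (\<phi> k) i))"
  proof (intro sum.cong refl)
    fix k assume k: "k \<in> ?P"
    have kle: "k i \<le> a i" if "i \<in> {1..n}" for i using k that by auto
    have inS: "\<phi> k \<in> S"
    proof -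
      have "(\<Sum>i=1..n. i * ((a i - kz k i) + kz k i)) = n"
        using asum kle by (simp add: kz_def)
      moreover have "\<forall>i. (a i - kz k i) + kz k i = a i"
        using kle asup by (auto simp: kz_def)
      moreover have "\<forall>i. i \<notin> {1..n} \<longrightarrow> a i = 0 \<and> kz k i = 0"
        using asup by (auto simp: kz_def)
      ultimately show ?thesis by (simp add: S_def \<phi>_def wmonoms_def)
    qed
    then have "gfun n a (\<phi> k) = (\<Prod>i=1..n. of_nat (a i choose k i) * cc i ^ k i)"
      by (simp add: gfun_def S_def \<phi>_def kz_def)
    then show "(\<Prod>i=1..n. f i (k i)) = gfun n a (\<phi> k) * (\<Prod>i=1..n. \<xi> i ^ fst (\<phi> k) i * \<eta> i ^ snd (\<phi> k) i)"
      by (simp add: f_def \<phi>_def kz_def prod.distrib[symmetric] power_mult_distrib mult_ac)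
  qed
  also have "\<dots> = (\<Sum>m\<in>S. gfun n a m * (\<Prod>i=1..n. \<xi> i ^ fst m i * \<eta> i ^ snd m i))"
  proof (rule sum.reindex_bij_betw, rule bij_betw_byWitness[where f'=\<psi>])
    show "\<forall>k\<in>?P. \<psi> (\<phi> k) = k"
      by (auto simp: \<psi>_def \<phi>_def kz_def restrict_def PiE_def extensional_def fun_eq_iff)
    show "\<forall>m\<in>S. \<phi> (\<psi> m) = m"
    proof
      fix m assume m: "m \<in> S"
      have "kz (\<psi> m) = snd m" using m by (auto simp: kz_def \<psi>_def S_def wmonoms_def fun_eq_iff)
      moreover have "\<forall>i. a i - snd m i = fst m i" using m by (auto simp: S_def) (metis add_diff_cancel_right')
      ultimately show "\<phi> (\<psi> m) = m" by (simp add: \<phi>_def prod_eq_iff fun_eq_iff)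
    qed
    show "\<phi> ` ?P \<subseteq> S"
    proof
      fix x assume "x \<in> \<phi> ` ?P"
      then obtain k where k: "k \<in> ?P" and x: "x = \<phi> k" by blast
      have kle: "k i \<le> a i" if "i \<in> {1..n}" for i using k that by auto
      have "(\<Sum>i=1..n. i * ((a i - kz k i) + kz k i)) = n"
        using asum kle by (simp add: kz_def)
      moreover have "\<forall>i. (a i - kz k i) + kz k i = a i"
        using kle asup by (auto simp: kz_def)
      moreover have "\<forall>i. i \<notin> {1..n} \<longrightarrow> a i = 0 \<and> kz k i = 0"
        using asup by (auto simp: kz_def)
      ultimately show "x \<in> S" by (simp add: x S_def \<phi>_def wmonoms_def)
    qed
    show "\<psi> ` S \<subseteq> ?P"
      by (auto simp: \<psi>_def S_def) (metis le_add2)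
  qed
  also have "\<dots> = Fval n (gfun n a) \<xi> \<eta>"
    unfolding Fval_def S_def
    by (rule sum.mono_neutral_left) (auto simp: finite_wmonoms gfun_def)
  finally show ?thesis by simp
qed

lemma gfun_Pspace:
  assumes a: "a \<in> Cset n n"
  shows "gfun n a \<in> Pspace n"
  unfolding Pspace_iff
proof safe
  fix m assume "m \<notin> wmonoms n" then show "gfun n a m = 0" by (simp add: gfun_def)
next
  fix X Y x
  have c: "(- x) ^ i + cc i * x ^ i = 0" for i
    by (simp add: cc_def power_minus[of x])
  show "Pev n (gfun n a) (X @ [- x]) (x # Y) = Pev n (gfun n a) X Y"
    unfolding Pev_Fval gfun_Fval[OF a]
  proof (intro prod.cong refl arg_cong2[where f="(^)"])
    fix i
    have "psum i (X @ [- x]) + cc i * psum i (x # Y) = psum i X + cc i * psum i Y + ((- x) ^ i + cc i * x ^ i)"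
      by (simp add: psum_append psum_Cons psum_Nil algebra_simps)
    then show "psum i (X @ [- x]) + cc i * psum i (x # Y) = psum i X + cc i * psum i Y"
      using c by simp
  qed
qed

interpretation V: vector_space "\<lambda>(c::complex) (f::monom \<Rightarrow> complex) x. c * f x"
  by unfold_locales (auto simp: fun_eq_iff algebra_simps)

lemma Pev_add: "Pev n (p + q) X Y = Pev n p X Y + Pev n q X Y"
  by (simp add: Pev_def sum.distrib distrib_right)

lemma Pev_scale: "Pev n (\<lambda>x. c * p x) X Y = c * Pev n p X Y"
  by (simp add: Pev_def sum_distrib_left mult.assoc)

lemma Pev_zero: "Pev n 0 X Y = 0"
  by (simp add: Pev_def)

lemma Pspace_subspace: "V.subspace (Pspace n)"
  unfolding V.subspace_def
  by (auto simp: Pspace_iff Pev_add Pev_scale Pev_zero)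

lemma Pspace_span: "Pspace n = V.span (gfun n ` Cset n n)"
proof
  have G: "gfun n ` Cset n n \<subseteq> Pspace n" using gfun_Pspace by blast
  show "V.span (gfun n ` Cset n n) \<subseteq> Pspace n"
    by (rule V.span_minimal[OF G Pspace_subspace])
  show "Pspace n \<subseteq> V.span (gfun n ` Cset n n)"
  proof
    fix p assume p: "p \<in> Pspace n"
    define s where "s = (\<Sum>a\<in>Cset n n. (\<lambda>x. p (a, \<lambda>_. 0) * gfun n a x))"
    have s_span: "s \<in> V.span (gfun n ` Cset n n)"
      unfolding s_def by (intro V.span_sum V.span_scale V.span_base) auto
    then have "s \<in> Pspace n" using V.span_minimal[OF G Pspace_subspace] by blast
    then have r: "p - s \<in> Pspace n" using V.subspace_diff[OF Pspace_subspace p] by blast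
    have "(p - s) (a', \<lambda>_. 0) = 0" for a'
    proof -
      have "s (a', \<lambda>_. 0) = (\<Sum>a\<in>Cset n n. p (a, \<lambda>_. 0) * gfun n a (a', \<lambda>_. 0))"
        by (simp add: s_def sum_fun_apply)
      also have "\<dots> = (\<Sum>a\<in>Cset n n. (if a' = a then p (a, \<lambda>_. 0) else 0))"
        by (intro sum.cong refl) (simp add: gfun_at0)
      also have "\<dots> = (if a' \<in> Cset n n then p (a', \<lambda>_. 0) else 0)"
        by (simp add: finite_Cset)
      also have "\<dots> = p (a', \<lambda>_. 0)"
        using p wmonoms_0[of a' n] by (auto simp: Pspace_iff)
      finally show ?thesis by simp
    qed
    then have "p - s = 0" by (intro upper[OF r]) 
    then have "p = s" by simp
    then show "p \<in> V.span (gfun n ` Cset n n)" using s_span by simp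
  qed
qed

lemma gfun_inj: "inj_on (gfun n) (Cset n n)"
proof (rule inj_onI)
  fix a1 a2 assume a: "a1 \<in> Cset n n" "a2 \<in> Cset n n" and e: "gfun n a1 = gfun n a2"
  have "gfun n a1 (a1, \<lambda>_. 0) = 1" using gfun_at0[OF a(1)] by simp
  then have "gfun n a2 (a1, \<lambda>_. 0) = 1" using e by simp
  then show "a1 = a2" using gfun_at0[OF a(2), of a1] by (simp split: if_splits)
qed

lemma gfun_indep: "V.independent (gfun n ` Cset n n)"
proof
  assume "V.dependent (gfun n ` Cset n n)"
  then obtain u where u: "\<exists>v\<in>gfun n ` Cset n n. u v \<noteq> 0"
    and s: "(\<Sum>v\<in>gfun n ` Cset n n. (\<lambda>x. u v * v x)) = 0"
    using V.dependent_finite[of "gfun n ` Cset n n"] finite_Cset by auto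
  obtain a where a: "a \<in> Cset n n" and ua: "u (gfun n a) \<noteq> 0" using u by blast
  have "0 = (\<Sum>v\<in>gfun n ` Cset n n. (\<lambda>x. u v * v x)) (a, \<lambda>_. 0)" using s by simp
  also have "\<dots> = (\<Sum>v\<in>gfun n ` Cset n n. u v * v (a, \<lambda>_. 0))" by (simp add: sum_fun_apply)
  also have "\<dots> = (\<Sum>a'\<in>Cset n n. u (gfun n a') * gfun n a' (a, \<lambda>_. 0))"
    by (rule sum.reindex[OF gfun_inj, unfolded comp_def])
  also have "\<dots> = (\<Sum>a'\<in>Cset n n. if a = a' then u (gfun n a') else 0)"
    by (intro sum.cong refl) (simp add: gfun_at0)
  also have "\<dots> = u (gfun n a)" using a by (simp add: finite_Cset)
  finally show False using ua by simp
qed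

lemma cdim_Pspace: "cdim (Pspace n) = card (Cset n n)"
proof -
  have "cdim (Pspace n) = V.dim (V.span (gfun n ` Cset n n))"
    unfolding cdim_def Pspace_span[symmetric] ..
  also have "\<dots> = card (gfun n ` Cset n n)" by (rule V.dim_span_eq_card_independent[OF gfun_indep])
  also have "\<dots> = card (Cset n n)" by (rule card_image[OF gfun_inj])
  finally show ?thesis .
qed

theorem theorem1:
  shows "(\<lambda>m. \<Prod>k=1..m. inverse (1 - fps_X ^ k :: complex fps))
           \<longlonglongrightarrow> Abs_fps (\<lambda>n. of_nat (cdim (Pspace n)))"
  using Pm_lim by (simp add: cdim_Pspace)


end
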